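(* Let $X$ be a Banach space and let $R:\Omega\to L(X)$ be a pseudo-resolvent which satisfies condition $\mathbf{(G_{k_0})}$ for some integer $k_0\ge1$. Then $$\ker R(\mu)^{k+1}=\ker R(\mu)^{k_0}\quad\text{and}\quad\overline{{\rm ran}\,R(\mu)^{k+1}}=\overline{{\rm ran}\,R(\mu)^{k_0}}$$ for all $\mu\in\Omega$ and all $k\ge k_0$.
   Context: Let $\Omega\subset\mathbb{C}$ be open. A map $R:\Omega\to L(X)$ is a pseudo-resolvent if $\frac{R(\lambda)-R(\mu)}{\mu-\lambda}=R(\lambda)R(\mu)$ for all $\lambda,\mu\in\Omega$ with $\lambda\neq\mu$. Condition $\mathbf{(G_k)}$ (for an integer $k\ge1$): there exist $M>0$ and a sequence $(\lambda_n)_{n\ge1}$ in $\Omega\cap\mathbb{R}$ with $\lambda_n\to\infty$ and $\|\lambda_n^{2-k}R(\lambda_n)\|\le M$ for all $n\ge1$. *)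

theory Defs
  imports "HOL-Analysis.Analysis"
begin

text \<open>Complex Banach spaces: a real Banach space with a compatible complex scalar
multiplication (the distribution has no complex vector space class).\<close>

class complex_banach = banach +
  fixes scaleC :: "complex \<Rightarrow> 'a \<Rightarrow> 'a"  (infixr "*\<^sub>C" 75)
  assumes scaleC_add_right: "a *\<^sub>C (x + y) = a *\<^sub>C x + a *\<^sub>C y"
    and scaleC_add_left: "(a + b) *\<^sub>C x = a *\<^sub>C x + b *\<^sub>C x"
    and scaleC_scaleC: "a *\<^sub>C (b *\<^sub>C x) = (a * b) *\<^sub>C x"
    and scaleC_one: "1 *\<^sub>C x = x"
    and scaleC_of_real: "complex_of_real r *\<^sub>C x = r *\<^sub>R x"
    and norm_scaleC: "norm (a *\<^sub>C x) = cmod a * norm x"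

definition bounded_clinear :: "('a::complex_banach \<Rightarrow> 'a) \<Rightarrow> bool" where
  "bounded_clinear T \<longleftrightarrow> bounded_linear T \<and> (\<forall>c x. T (c *\<^sub>C x) = c *\<^sub>C T x)"

definition pseudo_resolvent :: "complex set \<Rightarrow> (complex \<Rightarrow> 'a::complex_banach \<Rightarrow> 'a) \<Rightarrow> bool" where
  "pseudo_resolvent \<Omega> R \<longleftrightarrow> open \<Omega> \<and> (\<forall>z\<in>\<Omega>. bounded_clinear (R z)) \<and>
     (\<forall>z\<in>\<Omega>. \<forall>\<mu>\<in>\<Omega>. z \<noteq> \<mu> \<longrightarrow>
        (\<forall>x. inverse (\<mu> - z) *\<^sub>C (R z x - R \<mu> x) = R z (R \<mu> x)))"

definition cond_G :: "nat \<Rightarrow> complex set \<Rightarrow> (complex \<Rightarrow> 'a::complex_banach \<Rightarrow> 'a) \<Rightarrow> bool" where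
  "cond_G k \<Omega> R \<longleftrightarrow> (\<exists>M>0. \<exists>l :: nat \<Rightarrow> real.
     (\<forall>n\<ge>1. complex_of_real (l n) \<in> \<Omega>) \<and> filterlim l at_top sequentially \<and>
     (\<forall>n\<ge>1. onorm (\<lambda>x. (complex_of_real (l n) powi (2 - int k)) *\<^sub>C R (complex_of_real (l n)) x) \<le> M))"

end

theory Submission
  imports Defs
begin

lemma scaleC_zero_right: "a *\<^sub>C (0::'a::complex_banach) = 0"
  by (metis add_cancel_right_right add_0 scaleC_add_right)
lemma scaleC_zero_left: "0 *\<^sub>C (x::'a::complex_banach) = 0"
  by (metis add_cancel_right_right add_0 scaleC_add_left)
lemma scaleC_diff_right: "a *\<^sub>C (x - y) = a *\<^sub>C x - a *\<^sub>C (y::'a::complex_banach)"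
  by (metis diff_add_cancel eq_diff_eq scaleC_add_right)
lemma scaleC_diff_left: "(a - b) *\<^sub>C x = a *\<^sub>C x - b *\<^sub>C (x::'a::complex_banach)"
  by (metis diff_add_cancel eq_diff_eq scaleC_add_left)
lemma scaleC_minus_minus: "(- a) *\<^sub>C (- x) = a *\<^sub>C (x::'a::complex_banach)"
  by (metis diff_0 scaleC_diff_left scaleC_diff_right scaleC_zero_left scaleC_zero_right minus_minus)

lemma bclin_diff: "bounded_clinear T \<Longrightarrow> T (x - y) = T x - T y"
  unfolding bounded_clinear_def by (simp add: linear_diff bounded_linear.linear)
lemma bclin_add: "bounded_clinear T \<Longrightarrow> T (x + y) = T x + T y"
  unfolding bounded_clinear_def by (simp add: linear_add bounded_linear.linear)
lemma bclin_scale: "bounded_clinear T \<Longrightarrow> T (c *\<^sub>C x) = c *\<^sub>C T x"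
  unfolding bounded_clinear_def by simp
lemma bclin_zero: "bounded_clinear T \<Longrightarrow> T 0 = 0"
  using bclin_diff[of T 0 0] by simp

lemma bclin_pow: "bounded_clinear T \<Longrightarrow> bounded_clinear (T ^^ m)"
proof (induction m)
  case 0 then show ?case by (simp add: bounded_clinear_def id_def bounded_linear_ident)
next
  case (Suc m)
  then show ?case unfolding bounded_clinear_def
    by (auto intro: bounded_linear_compose[of T "T ^^ m", simplified comp_def] simp: comp_def)
qed

lemma bl_scaleC: "bounded_linear (\<lambda>x::'a::complex_banach. c *\<^sub>C x)"
proof
  fix x y :: 'a and r :: real
  show "c *\<^sub>C (x + y) = c *\<^sub>C x + c *\<^sub>C y" by (rule scaleC_add_right)
  show "c *\<^sub>C (r *\<^sub>R x) = r *\<^sub>R (c *\<^sub>C x)"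
    by (metis mult.commute scaleC_of_real scaleC_scaleC)
  show "\<exists>K. \<forall>x::'a. norm (c *\<^sub>C x) \<le> norm x * K"
    by (rule exI[of _ "cmod c"]) (simp add: norm_scaleC mult.commute)
qed

lemma scaleC_tendsto0:
  assumes "(c \<longlongrightarrow> 0) F" shows "((\<lambda>n. c n *\<^sub>C (v::'a::complex_banach)) \<longlongrightarrow> 0) F"
proof (rule Lim_null_comparison)
  show "\<forall>\<^sub>F n in F. norm (c n *\<^sub>C v) \<le> cmod (c n) * norm v" by (simp add: norm_scaleC)
  show "((\<lambda>n. cmod (c n) * norm v) \<longlongrightarrow> 0) F"
    using tendsto_mult[OF tendsto_norm[OF assms] tendsto_const[of "norm v"]] by simp
qed

lemma powi_cmod:
  assumes "l > 0" "k \<ge> 1"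
  shows "cmod (complex_of_real l powi (2 - int k)) = l / l ^ (k - 1)"
proof -
  have e: "2 - int k = 1 - int (k - 1)" using assms by simp
  have "cmod (complex_of_real l powi (2 - int k)) = l powi (1 - int (k - 1))"
    using assms by (simp only: e norm_power_int norm_of_real)
  also have "l powi (1 - int (k - 1)) = l / l ^ (k - 1)"
    using assms by (cases k) (auto simp: power_int_diff power2_eq_square field_simps)
  finally show ?thesis .
qed


lemma main_step:
  fixes R :: "complex \<Rightarrow> 'a::complex_banach \<Rightarrow> 'a" and \<Omega> :: "complex set" and k0 :: nat
  assumes PR: "pseudo_resolvent \<Omega> R" and k0: "k0 \<ge> 1" and G: "cond_G k0 \<Omega> R" and mu: "\<mu> \<in> \<Omega>"
  shows "\<And>x. (R \<mu> ^^ (Suc k0)) x = 0 \<Longrightarrow> (R \<mu> ^^ k0) x = 0"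
    and "range (R \<mu> ^^ k0) \<subseteq> closure (range (R \<mu> ^^ (Suc k0)))"
proof -
  obtain M l where M: "M > 0" and lO: "\<forall>n\<ge>1. complex_of_real (l n) \<in> \<Omega>"
    and lim: "filterlim l at_top sequentially"
    and bnd: "\<forall>n\<ge>1. onorm (\<lambda>x. (complex_of_real (l n) powi (2 - int k0)) *\<^sub>C R (complex_of_real (l n)) x) \<le> M"
    using G unfolding cond_G_def by blast
  define N where "N = R \<mu>"
  have bcR: "\<And>z. z \<in> \<Omega> \<Longrightarrow> bounded_clinear (R z)" using PR unfolding pseudo_resolvent_def by blast
  have bcN: "bounded_clinear N" using bcR mu N_def by simp
  have bcNm: "\<And>m. bounded_clinear (N ^^ m)" using bcN bclin_pow by blast
  have PRid: "\<And>z w x. z \<in> \<Omega> \<Longrightarrow> w \<in> \<Omega> \<Longrightarrow> z \<noteq> w \<Longrightarrow> inverse (w - z) *\<^sub>C (R z x - R w x) = R z (R w x)"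
    using PR unfolding pseudo_resolvent_def by blast
  have comm: "N (R z x) = R z (N x)" if z: "z \<in> \<Omega>" "z \<noteq> \<mu>" for z x
  proof -
    have "N (R z x) = inverse (z - \<mu>) *\<^sub>C (N x - R z x)" using PRid[OF mu z(1)] z(2) N_def by metis
    also have "\<dots> = (- inverse (\<mu> - z)) *\<^sub>C (- (R z x - N x))"
      by (metis inverse_minus_eq minus_diff_eq)
    also have "\<dots> = inverse (\<mu> - z) *\<^sub>C (R z x - N x)" by (rule scaleC_minus_minus)
    also have "\<dots> = R z (N x)" using PRid[OF z(1) mu] z(2) N_def by metis
    finally show ?thesis .
  qed
  have ident: "R z x = N x + (\<mu> - z) *\<^sub>C N (R z x)" if z: "z \<in> \<Omega>" "z \<noteq> \<mu>" for z x
  proof -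
    have "(\<mu> - z) *\<^sub>C N (R z x) = (\<mu> - z) *\<^sub>C (inverse (\<mu> - z) *\<^sub>C (R z x - N x))"
      using PRid[OF z(1) mu] z comm N_def by metis
    also have "\<dots> = R z x - N x" using z by (simp add: scaleC_scaleC scaleC_one)
    finally show ?thesis by simp
  qed
  have identm: "(N ^^ m) (R z x) = (N ^^ Suc m) x + (\<mu> - z) *\<^sub>C (N ^^ Suc m) (R z x)"
    if z: "z \<in> \<Omega>" "z \<noteq> \<mu>" for z x m
  proof -
    have "(N ^^ m) (R z x) = (N ^^ m) (N x + (\<mu> - z) *\<^sub>C N (R z x))" using ident[OF z] by metis
    also have "\<dots> = (N ^^ m) (N x) + (\<mu> - z) *\<^sub>C (N ^^ m) (N (R z x))"
      using bcNm bclin_add bclin_scale by metis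
    finally show ?thesis by (simp only: funpow_Suc_right comp_def)
  qed
  have commm: "(N ^^ m) (R z x) = R z ((N ^^ m) x)" if z: "z \<in> \<Omega>" "z \<noteq> \<mu>" for z x m
    by (induction m) (simp_all add: comm[OF z])
  define lam where "lam n = complex_of_real (l n)" for n
  define ev where "ev n \<longleftrightarrow> n \<ge> 1 \<and> l n \<ge> max 2 (2 * cmod \<mu>)" for n
  have evF: "eventually ev sequentially"
  proof -
    have "\<forall>\<^sub>F n in sequentially. max 2 (2 * cmod \<mu>) \<le> l n"
      using filterlim_at_top[THEN iffD1, OF lim] by blast
    moreover have "\<forall>\<^sub>F n in sequentially. (1::nat) \<le> n" by (rule eventually_ge_at_top)
    ultimately show ?thesis unfolding ev_def by eventually_elim simp
  qed
  have evp: "lam n \<in> \<Omega> \<and> lam n \<noteq> \<mu> \<and> cmod (\<mu> - lam n) \<ge> l n / 2 \<and> cmod (\<mu> - lam n) \<ge> 1 \<and> l n > 0"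
    if "ev n" for n
  proof -
    have l: "l n \<ge> 2" "l n \<ge> 2 * cmod \<mu>" "n \<ge> 1" using that ev_def by auto
    have "cmod (\<mu> - lam n) \<ge> cmod (lam n) - cmod \<mu>" by (metis norm_minus_commute norm_triangle_ineq2)
    moreover have "cmod (lam n) = l n" using l lam_def by simp
    ultimately have c: "cmod (\<mu> - lam n) \<ge> l n / 2" using l by linarith
    then show ?thesis using l lO lam_def by force
  qed
  have base: "norm (inverse ((\<mu> - lam n) ^ (k0 - 1)) *\<^sub>C R (lam n) x) \<le> 2 ^ (k0 - 1) * M * norm x / l n"
    if "ev n" for n x
  proof -
    note e = evp[OF that]
    have n1: "n \<ge> 1" using that ev_def by simp
    have blin: "bounded_linear (\<lambda>x. (lam n powi (2 - int k0)) *\<^sub>C R (lam n) x)"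
      using bounded_linear_compose[OF bl_scaleC, of "R (lam n)"] bcR[of "lam n"] e
      unfolding bounded_clinear_def by blast
    have "norm ((lam n powi (2 - int k0)) *\<^sub>C R (lam n) x) \<le> onorm (\<lambda>x. (lam n powi (2 - int k0)) *\<^sub>C R (lam n) x) * norm x"
      by (rule onorm[OF blin])
    also have "\<dots> \<le> M * norm x" using bnd n1 lam_def by (simp add: mult_right_mono)
    finally have A: "l n / l n ^ (k0 - 1) * norm (R (lam n) x) \<le> M * norm x"
      using powi_cmod[of "l n" k0] e k0 lam_def by (simp add: norm_scaleC)
    have lpos: "l n > 0" using e by simp
    have dpos: "(l n / 2) ^ (k0 - 1) > 0" using lpos by simp
    have "norm (inverse ((\<mu> - lam n) ^ (k0 - 1)) *\<^sub>C R (lam n) x) = norm (R (lam n) x) / cmod (\<mu> - lam n) ^ (k0 - 1)"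
      by (simp add: norm_scaleC norm_inverse norm_power divide_inverse mult.commute)
    also have "\<dots> \<le> norm (R (lam n) x) / (l n / 2) ^ (k0 - 1)"
      using e dpos by (intro divide_left_mono power_mono mult_pos_pos) auto
    also have "\<dots> = 2 ^ (k0 - 1) * (l n / l n ^ (k0 - 1) * norm (R (lam n) x)) / l n"
      using lpos by (simp add: power_divide field_simps)
    also have "\<dots> \<le> 2 ^ (k0 - 1) * (M * norm x) / l n"
      using A lpos by (intro divide_right_mono mult_left_mono) auto
    finally show ?thesis by simp
  qed
  have linf: "filterlim l at_infinity sequentially"
    by (rule filterlim_at_top_imp_at_infinity[OF lim])
  have invd: "((\<lambda>n. inverse ((\<mu> - lam n) ^ p)) \<longlongrightarrow> 0) sequentially" if p: "p \<ge> 1" for p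
  proof (rule Lim_null_comparison)
    show "\<forall>\<^sub>F n in sequentially. norm (inverse ((\<mu> - lam n) ^ p)) \<le> 2 / l n"
      using evF
    proof eventually_elim
      case (elim n)
      note e = evp[OF elim]
      have "cmod (\<mu> - lam n) \<le> cmod (\<mu> - lam n) ^ p"
        using power_increasing[of 1 p "cmod (\<mu> - lam n)"] e p by simp
      then have "l n / 2 \<le> cmod (\<mu> - lam n) ^ p" using e by linarith
      then have "inverse (cmod (\<mu> - lam n) ^ p) \<le> inverse (l n / 2)"
        using e by (intro le_imp_inverse_le) auto
      then show ?case by (simp add: norm_inverse norm_power)
    qed
    show "((\<lambda>n. 2 / l n) \<longlongrightarrow> 0) sequentially"
      by (rule tendsto_divide_0[OF tendsto_const linf])
  qed
  have claim: "((\<lambda>n. inverse ((\<mu> - lam n) ^ (k0 - 1 - m)) *\<^sub>C (N ^^ m) (R (lam n) x)) \<longlongrightarrow> 0) sequentially"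
    if "m \<le> k0 - 1" for m x
    using that
  proof (induction m)
    case 0
    show ?case
    proof (rule Lim_null_comparison)
      show "\<forall>\<^sub>F n in sequentially. norm (inverse ((\<mu> - lam n) ^ (k0 - 1 - 0)) *\<^sub>C (N ^^ 0) (R (lam n) x))
               \<le> 2 ^ (k0 - 1) * M * norm x / l n"
        using evF by eventually_elim (use base in auto)
      show "((\<lambda>n. 2 ^ (k0 - 1) * M * norm x / l n) \<longlongrightarrow> 0) sequentially"
        by (rule tendsto_divide_0[OF tendsto_const linf])
    qed
  next
    case (Suc m)
    define p where "p = k0 - 1 - m"
    have p1: "p \<ge> 1" and pm: "k0 - 1 - Suc m = p - 1" using Suc.prems p_def by auto
    have IH: "((\<lambda>n. inverse ((\<mu> - lam n) ^ p) *\<^sub>C (N ^^ m) (R (lam n) x)) \<longlongrightarrow> 0) sequentially"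
      using Suc p_def by simp
    have T2: "((\<lambda>n. inverse ((\<mu> - lam n) ^ p) *\<^sub>C (N ^^ Suc m) x) \<longlongrightarrow> 0) sequentially"
      by (rule scaleC_tendsto0[OF invd[OF p1]])
    have "((\<lambda>n. inverse ((\<mu> - lam n) ^ p) *\<^sub>C (N ^^ m) (R (lam n) x)
               - inverse ((\<mu> - lam n) ^ p) *\<^sub>C (N ^^ Suc m) x) \<longlongrightarrow> 0 - 0) sequentially"
      by (rule tendsto_diff[OF IH T2])
    then have L: "((\<lambda>n. inverse ((\<mu> - lam n) ^ p) *\<^sub>C (N ^^ m) (R (lam n) x)
               - inverse ((\<mu> - lam n) ^ p) *\<^sub>C (N ^^ Suc m) x) \<longlongrightarrow> 0) sequentially" by simp
    show ?case
    proof (rule Lim_transform_eventually[OF L])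
      show "\<forall>\<^sub>F n in sequentially. inverse ((\<mu> - lam n) ^ p) *\<^sub>C (N ^^ m) (R (lam n) x)
               - inverse ((\<mu> - lam n) ^ p) *\<^sub>C (N ^^ Suc m) x
            = inverse ((\<mu> - lam n) ^ (k0 - 1 - Suc m)) *\<^sub>C (N ^^ Suc m) (R (lam n) x)"
        using evF
      proof eventually_elim
        case (elim n)
        note e = evp[OF elim]
        define d where "d = \<mu> - lam n"
        have d0: "d \<noteq> 0" using e d_def by auto
        have "inverse (d ^ p) *\<^sub>C (N ^^ m) (R (lam n) x) - inverse (d ^ p) *\<^sub>C (N ^^ Suc m) x
            = inverse (d ^ p) *\<^sub>C (d *\<^sub>C (N ^^ Suc m) (R (lam n) x))"
        proof -
          have h: "(N ^^ m) (R (lam n) x) - (N ^^ Suc m) x = d *\<^sub>C (N ^^ Suc m) (R (lam n) x)"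
            using identm[where z="lam n" and x=x and m="m"] e d_def by (metis add_diff_cancel_left')
          show ?thesis by (simp only: scaleC_diff_right[symmetric] h)
        qed
        also have "\<dots> = (inverse (d ^ p) * d) *\<^sub>C (N ^^ Suc m) (R (lam n) x)" by (simp add: scaleC_scaleC)
        also have "inverse (d ^ p) * d = inverse (d ^ (p - 1))"
          using d0 p1 by (cases p) (auto simp: field_simps)
        finally show ?case using pm d_def by simp
      qed
    qed
  qed
  have top: "((\<lambda>n. (N ^^ k0) x + (\<mu> - lam n) *\<^sub>C (N ^^ k0) (R (lam n) x)) \<longlongrightarrow> 0) sequentially" for x
  proof (rule Lim_transform_eventually[OF claim[where m="k0 - 1" and x=x]])
    show "\<forall>\<^sub>F n in sequentially. inverse ((\<mu> - lam n) ^ (k0 - 1 - (k0 - 1))) *\<^sub>C (N ^^ (k0 - 1)) (R (lam n) x)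
       = (N ^^ k0) x + (\<mu> - lam n) *\<^sub>C (N ^^ k0) (R (lam n) x)"
      using evF
    proof eventually_elim
      case (elim n)
      note e = evp[OF elim]
      show ?case using identm[where z="lam n" and x=x and m="k0 - 1"] e k0 by (simp add: scaleC_one)
    qed
  qed simp
  show "(R \<mu> ^^ k0) x = 0" if x: "(R \<mu> ^^ Suc k0) x = 0" for x
  proof -
    have "((\<lambda>n. (N ^^ k0) x) \<longlongrightarrow> 0) sequentially"
    proof (rule Lim_transform_eventually[OF top[of x]])
      show "\<forall>\<^sub>F n in sequentially. (N ^^ k0) x + (\<mu> - lam n) *\<^sub>C (N ^^ k0) (R (lam n) x) = (N ^^ k0) x"
        using evF
      proof eventually_elim
        case (elim n)
        note e = evp[OF elim]
        have "(N ^^ k0) (R (lam n) x) = (N ^^ Suc k0) x + (\<mu> - lam n) *\<^sub>C R (lam n) ((N ^^ Suc k0) x)"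
          using identm[where z="lam n" and x=x and m="k0"] commm[where z="lam n" and x=x and m="Suc k0"] e by simp
        also have "\<dots> = 0" using x N_def bclin_zero[OF bcR[of "lam n"]] e by (simp add: scaleC_zero_right)
        finally show ?case by (simp add: scaleC_zero_right)
      qed
    qed
    then show ?thesis using N_def LIMSEQ_const_iff by metis
  qed
  show "range (R \<mu> ^^ k0) \<subseteq> closure (range (R \<mu> ^^ (Suc k0)))"
  proof
    fix y assume "y \<in> range (R \<mu> ^^ k0)"
    then obtain x where y: "y = (N ^^ k0) x" using N_def by auto
    define s where "s n = (N ^^ Suc k0) ((- (\<mu> - lam n)) *\<^sub>C (x + (\<mu> - lam n) *\<^sub>C R (lam n) x))" for n
    have srange: "\<forall>n. s n \<in> range (R \<mu> ^^ Suc k0)" using s_def N_def by auto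
    have "((\<lambda>n. y - s n) \<longlongrightarrow> 0) sequentially"
    proof (rule Lim_transform_eventually[OF top[of x]])
      show "\<forall>\<^sub>F n in sequentially. (N ^^ k0) x + (\<mu> - lam n) *\<^sub>C (N ^^ k0) (R (lam n) x) = y - s n"
        using evF
      proof eventually_elim
        case (elim n)
        note e = evp[OF elim]
        define d where "d = \<mu> - lam n"
        have "s n = (- d) *\<^sub>C (N ^^ Suc k0) (x + d *\<^sub>C R (lam n) x)"
          using s_def d_def bcNm bclin_scale by metis
        also have "(N ^^ Suc k0) (x + d *\<^sub>C R (lam n) x) = (N ^^ k0) (R (lam n) x)"
          using identm[where z="lam n" and x=x and m="k0"] e d_def bcNm bclin_add bclin_scale by metis
        finally have "s n = (- d) *\<^sub>C (N ^^ k0) (R (lam n) x)" .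
        also have "\<dots> = - (d *\<^sub>C (N ^^ k0) (R (lam n) x))"
          using scaleC_diff_left[of 0 d] by (simp add: scaleC_zero_left)
        finally show ?case using y d_def by simp
      qed
    qed
    then have "((\<lambda>n. y - (y - s n)) \<longlongrightarrow> y - 0) sequentially"
      by (intro tendsto_diff tendsto_const)
    then have "s \<longlonglongrightarrow> y" by simp
    then show "y \<in> closure (range (R \<mu> ^^ Suc k0))"
      using srange closure_sequential by blast
  qed
qed

theorem mainTheorem4:
  fixes R :: "complex \<Rightarrow> 'a::complex_banach \<Rightarrow> 'a" and \<Omega> :: "complex set" and k0 :: nat
  assumes "pseudo_resolvent \<Omega> R" and "k0 \<ge> 1" and "cond_G k0 \<Omega> R"
  shows "\<forall>\<mu>\<in>\<Omega>. \<forall>k\<ge>k0.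
           {x. (R \<mu> ^^ (k + 1)) x = 0} = {x. (R \<mu> ^^ k0) x = 0} \<and>
           closure (range (R \<mu> ^^ (k + 1))) = closure (range (R \<mu> ^^ k0))"
proof (intro ballI allI impI)
  fix \<mu> k assume mu: "\<mu> \<in> \<Omega>" and kk: "k0 \<le> k"
  define N where "N = R \<mu>"
  have bcN: "bounded_clinear N" using assms(1) mu N_def unfolding pseudo_resolvent_def by blast
  have contN: "continuous_on UNIV N"
    using bcN unfolding bounded_clinear_def by (simp add: linear_continuous_on)
  have K0: "(N ^^ Suc k0) x = 0 \<Longrightarrow> (N ^^ k0) x = 0" for x
    using main_step(1)[OF assms mu] N_def by blast
  have C0: "range (N ^^ k0) \<subseteq> closure (range (N ^^ Suc k0))"
    using main_step(2)[OF assms mu] N_def by blast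
  have Kj: "(N ^^ Suc (k0 + j)) x = 0 \<Longrightarrow> (N ^^ (k0 + j)) x = 0" for j x
  proof (induction j arbitrary: x)
    case 0 then show ?case using K0 by simp
  next
    case (Suc j)
    have "(N ^^ Suc (k0 + j)) (N x) = 0" using Suc.prems by (simp only: funpow_Suc_right comp_def add_Suc_right)
    then have "(N ^^ (k0 + j)) (N x) = 0" by (rule Suc.IH)
    then show ?case by (simp only: funpow_Suc_right comp_def add_Suc_right)
  qed
  have Cj: "range (N ^^ (k0 + j)) \<subseteq> closure (range (N ^^ Suc (k0 + j)))" for j
  proof (induction j)
    case 0 then show ?case using C0 by simp
  next
    case (Suc j)
    have r1: "range (N ^^ Suc (k0 + j)) = N ` range (N ^^ (k0 + j))"
      by (auto simp: image_iff)
    have r2: "range (N ^^ Suc (Suc (k0 + j))) = N ` range (N ^^ Suc (k0 + j))"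
      by (simp only: funpow.simps(2) image_comp[symmetric] fun.set_map) 
    have "N ` closure (range (N ^^ Suc (k0 + j))) \<subseteq> closure (N ` range (N ^^ Suc (k0 + j)))"
      by (rule image_closure_subset[OF continuous_on_subset[OF contN subset_UNIV] closed_closure closure_subset])
    moreover have "N ` range (N ^^ (k0 + j)) \<subseteq> N ` closure (range (N ^^ Suc (k0 + j)))"
      using Suc.IH by (rule image_mono)
    ultimately have "range (N ^^ Suc (k0 + j)) \<subseteq> closure (range (N ^^ Suc (Suc (k0 + j))))"
      unfolding r1 r2 by (rule order_trans[rotated])
    then show ?case by (simp only: add_Suc_right)
  qed
  have Kall: "{x. (N ^^ (k0 + j)) x = 0} = {x. (N ^^ k0) x = 0}" for j
  proof (induction j)
    case 0 then show ?case by simp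
  next
    case (Suc j)
    have "(N ^^ Suc (k0 + j)) x = 0 \<longleftrightarrow> (N ^^ (k0 + j)) x = 0" for x
      using Kj[of j x] bclin_zero[OF bcN] by auto
    then show ?case using Suc.IH by (simp add: add_Suc_right)
  qed
  have Call: "closure (range (N ^^ (k0 + j))) = closure (range (N ^^ k0))" for j
  proof (induction j)
    case 0 then show ?case by simp
  next
    case (Suc j)
    have "range (N ^^ Suc (k0 + j)) \<subseteq> range (N ^^ (k0 + j))"
    proof
      fix y assume "y \<in> range (N ^^ Suc (k0 + j))"
      then obtain x where "y = (N ^^ Suc (k0 + j)) x" by auto
      then have "y = (N ^^ (k0 + j)) (N x)" by (simp only: funpow_Suc_right comp_def)
      then show "y \<in> range (N ^^ (k0 + j))" by simp
    qed
    then have "closure (range (N ^^ Suc (k0 + j))) = closure (range (N ^^ (k0 + j)))"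
      using Cj[of j] by (meson closure_minimal closure_mono closed_closure subset_antisym)
    then show ?case using Suc.IH by (simp add: add_Suc_right)
  qed
  obtain j where j: "k + 1 = k0 + j" using kk by (metis add.commute le_add1 le_trans nat_le_iff_add)
  show "{x. (R \<mu> ^^ (k + 1)) x = 0} = {x. (R \<mu> ^^ k0) x = 0} \<and>
           closure (range (R \<mu> ^^ (k + 1))) = closure (range (R \<mu> ^^ k0))"
    using Kall[of j] Call[of j] j N_def by simp
qed

end
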